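(* Let $\{N_i(t_i),t_i\ge0\}$, $i=1,\dots,d$, be independent simple counting processes, $\mathcal{F}^{(i)}(t_i)=\sigma(N_i(s_i),s_i\le t_i)$, and $\mathcal{F}(\mathbf{t})=\bigvee_{i=1}^d\mathcal{F}^{(i)}(t_i)$ for $\mathbf{t}=(t_1,\dots,t_d)\in\mathbb{R}^d_+$. For $\boldsymbol{\Lambda}=(\lambda_1,\dots,\lambda_d)$ with all $\lambda_i>0$, let $Y(\mathbf{t})=\sum_{i=1}^dN_i(t_i)\ln(u)-\boldsymbol{\Lambda}\cdot\mathbf{t}\,(u-1)$, $0<u\le1$. Then $\{\exp(Y(\mathbf{t})),\mathbf{t}\in\mathbb{R}^d_+\}$ is a multiparameter martingale with respect to $\{\mathcal{F}(\mathbf{t})\}$ (for every $u\in(0,1]$) if and only if $\{\sum_{i=1}^dN_i(t_i),\mathbf{t}\in\mathbb{R}^d_+\}$ is a multiparameter Poisson process with transition parameter $\boldsymbol{\Lambda}$.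
   Context: $\boldsymbol{\Lambda}\cdot\mathbf{t}=\sum_i\lambda_it_i$; $\preceq$ is the componentwise order, $\prec$ the strict relation. A simple counting process is a nonnegative-integer-valued, nondecreasing process starting at 0 with jumps of size 1. A multiparameter Poisson process with transition parameter $\boldsymbol{\Lambda}$ is a nonnegative-integer-valued random field on $\mathbb{R}^d_+$, 0 at $\mathbf{0}$, nondecreasing in $\preceq$, with independent increments along chains $\mathbf{0}=\mathbf{t}^{(0)}\prec\dots\prec\mathbf{t}^{(m)}$, stationary increments, and $\mathcal{N}(\mathbf{t})\sim$ Poisson$(\boldsymbol{\Lambda}\cdot\mathbf{t})$. A multiparameter martingale w.r.t. a filtration increasing in $\preceq$ is an integrable adapted process with $\mathbb{E}(M(\mathbf{t})\mid\mathcal{F}(\mathbf{s}))=M(\mathbf{s})$ a.s. for $\mathbf{s}\preceq\mathbf{t}$. *)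

theory Defs
  imports "HOL-Probability.Probability" "HOL-Library.Function_Algebras"
begin

text \<open>Points of R^d_+ are functions t :: 'd \<Rightarrow> real with 0 \<le> t (pointwise order);
  the componentwise order is the pointwise order on functions, and the strict
  relation is the induced strict order (s \<le> t and s \<noteq> t).\<close>

definition dotp :: "('d::finite \<Rightarrow> real) \<Rightarrow> ('d \<Rightarrow> real) \<Rightarrow> real" where
  "dotp \<Lambda> t = (\<Sum>i\<in>UNIV. \<Lambda> i * t i)"

definition simple_counting_process :: "'a measure \<Rightarrow> (real \<Rightarrow> 'a \<Rightarrow> nat) \<Rightarrow> bool" where
  "simple_counting_process M N \<longleftrightarrow>
     (\<forall>\<omega>\<in>space M.
        N 0 \<omega> = 0 \<and>
        (\<forall>s t. 0 \<le> s \<and> s \<le> t \<longrightarrow> N s \<omega> \<le> N t \<omega>) \<and>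
        (\<forall>t\<ge>0. \<exists>s>t. N s \<omega> = N t \<omega>) \<and>
        (\<forall>t>0. \<exists>s. 0 \<le> s \<and> s < t \<and> N t \<omega> \<le> N s \<omega> + 1))"

definition proc_sigma :: "'a measure \<Rightarrow> (real \<Rightarrow> 'a \<Rightarrow> nat) \<Rightarrow> real set \<Rightarrow> 'a set set" where
  "proc_sigma M N S = sigma_sets (space M) {N s -` A \<inter> space M | s A. s \<in> S}"

definition mp_filtration ::
  "'a measure \<Rightarrow> ('d \<Rightarrow> real \<Rightarrow> 'a \<Rightarrow> nat) \<Rightarrow> ('d \<Rightarrow> real) \<Rightarrow> 'a measure" where
  "mp_filtration M N t =
     sigma (space M) (\<Union>i. {N i s -` A \<inter> space M | s A. 0 \<le> s \<and> s \<le> t i})"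

definition mp_martingale ::
  "'a measure \<Rightarrow> (('d \<Rightarrow> real) \<Rightarrow> 'a measure) \<Rightarrow> (('d \<Rightarrow> real) \<Rightarrow> 'a \<Rightarrow> real) \<Rightarrow> bool" where
  "mp_martingale M F X \<longleftrightarrow>
     (\<forall>t. 0 \<le> t \<longrightarrow> integrable M (X t) \<and> X t \<in> borel_measurable (F t)) \<and>
     (\<forall>s t. 0 \<le> s \<and> s \<le> t \<longrightarrow>
        (AE \<omega> in M. real_cond_exp M (F s) (X t) \<omega> = X s \<omega>))"

definition mp_poisson_process ::
  "'a measure \<Rightarrow> ('d::finite \<Rightarrow> real) \<Rightarrow> (('d \<Rightarrow> real) \<Rightarrow> 'a \<Rightarrow> nat) \<Rightarrow> bool" where
  "mp_poisson_process M \<Lambda> X \<longleftrightarrow>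
     (\<forall>t. 0 \<le> t \<longrightarrow> X t \<in> measurable M (count_space UNIV)) \<and>
     (\<forall>\<omega>\<in>space M. X 0 \<omega> = 0) \<and>
     (\<forall>\<omega>\<in>space M. \<forall>s t. 0 \<le> s \<and> s \<le> t \<longrightarrow> X s \<omega> \<le> X t \<omega>) \<and>
     (\<forall>m (c :: nat \<Rightarrow> 'd \<Rightarrow> real). c 0 = 0 \<and> (\<forall>k<m. c k < c (Suc k)) \<longrightarrow>
        prob_space.indep_vars M (\<lambda>_. count_space UNIV)
          (\<lambda>k \<omega>. X (c (Suc k)) \<omega> - X (c k) \<omega>) {..<m}) \<and>
     (\<forall>s t. 0 \<le> s \<and> s \<le> t \<longrightarrow>
        distr M (count_space UNIV) (\<lambda>\<omega>. X t \<omega> - X s \<omega>) =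
        distr M (count_space UNIV) (X (t - s))) \<and>
     (\<forall>t. 0 \<le> t \<longrightarrow> (\<forall>k::nat.
        measure M {\<omega>\<in>space M. X t \<omega> = k} =
          exp (- dotp \<Lambda> t) * dotp \<Lambda> t ^ k / fact k))"

end

theory Submission
  imports Defs
begin

lemma measurable_nat_add:
  assumes "f \<in> measurable M (count_space UNIV)" "g \<in> measurable M (count_space UNIV)"
  shows "(\<lambda>\<omega>. f \<omega> + g \<omega> :: nat) \<in> measurable M (count_space UNIV)"
proof -
  have "(\<lambda>\<omega>. (\<lambda>n \<omega>. n + g \<omega>) (f \<omega>) \<omega>) \<in> measurable M (count_space UNIV)"
    by (rule measurable_compose_countable[OF _ assms(1)], rule measurable_compose[OF assms(2)]) simp
  then show ?thesis by simp
qed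

lemma measurable_nat_diff:
  assumes "f \<in> measurable M (count_space UNIV)" "g \<in> measurable M (count_space UNIV)"
  shows "(\<lambda>\<omega>. f \<omega> - g \<omega> :: nat) \<in> measurable M (count_space UNIV)"
proof -
  have "(\<lambda>\<omega>. (\<lambda>n \<omega>. n - g \<omega>) (f \<omega>) \<omega>) \<in> measurable M (count_space UNIV)"
    by (rule measurable_compose_countable[OF _ assms(1)], rule measurable_compose[OF assms(2)]) simp
  then show ?thesis by simp
qed

lemma measurable_nat_sum:
  assumes "finite I" "\<And>i. i \<in> I \<Longrightarrow> f i \<in> measurable M (count_space UNIV)"
  shows "(\<lambda>\<omega>. \<Sum>i\<in>I. f i \<omega> :: nat) \<in> measurable M (count_space UNIV)"
  using assms by (induction I rule: finite_induct) (auto intro: measurable_nat_add)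

lemma vimage_in_sigma_singletons:
  fixes D :: "'a \<Rightarrow> nat"
  shows "D -` B \<inter> \<Omega> \<in> sigma_sets \<Omega> (insert {} {D -` {k} \<inter> \<Omega> | k. True})"
proof -
  have "D -` B \<inter> \<Omega> = (\<Union>k. if k \<in> B then D -` {k} \<inter> \<Omega> else {})" by auto
  also have "\<dots> \<in> sigma_sets \<Omega> (insert {} {D -` {k} \<inter> \<Omega> | k. True})"
    by (intro sigma_sets.Union) (auto intro: sigma_sets.Basic)
  finally show ?thesis .
qed

lemma Int_stable_singletons:
  fixes D :: "'a \<Rightarrow> nat"
  shows "Int_stable (insert {} {D -` {k} \<inter> \<Omega> | k. True})"
  by (rule Int_stableI) auto

lemma pgf_unique:
  fixes a b :: "nat \<Rightarrow> real"
  assumes sa: "\<And>x. \<bar>x\<bar> < 1 \<Longrightarrow> summable (\<lambda>k. a k * x^k)"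
    and sb: "\<And>x. \<bar>x\<bar> < 1 \<Longrightarrow> summable (\<lambda>k. b k * x^k)"
    and eq: "\<And>u. 0 < u \<Longrightarrow> u < 1 \<Longrightarrow> (\<Sum>k. a k * u^k) = (\<Sum>k. b k * u^k)"
  shows "a = b"
proof -
  define c where "c k = a k - b k" for k
  define S where "S x = (\<Sum>k. a k * x^k) - (\<Sum>k. b k * x^k)" for x :: real
  have sc: "(\<lambda>k. c k * x^k) sums S x" if "\<bar>x\<bar> < 1" for x
    using sums_diff[OF summable_sums[OF sa[OF that]] summable_sums[OF sb[OF that]]]
    by (simp add: c_def S_def algebra_simps)
  have z: "S u = 0" if "0<u" "u<1" for u
    using eq[OF that] by (simp add: S_def)
  have "c n = 0" for n
  proof (induction n rule: less_induct)
    case (less n)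
    define g where "g x = S x / x^n" for x :: real
    have sg: "(\<lambda>k. c (k+n) * x^k) sums g x" if "x \<noteq> 0" "norm x < 1" for x :: real
    proof -
      have "(\<lambda>k. c (k+n) * x^(k+n)) sums (S x - (\<Sum>k<n. c k * x^k))"
        using sc[of x] that sums_iff_shift[of "\<lambda>k. c k * x^k" n] by simp
      also have "(\<Sum>k<n. c k * x^k) = 0" using less by simp
      finally have "(\<lambda>k. c (k+n) * x^(k+n) / x^n) sums (S x / x^n)" by (intro sums_divide) simp
      then show ?thesis using that by (simp add: g_def power_add)
    qed
    have lim: "(g \<longlongrightarrow> c (0+n)) (at 0)"
      by (rule powser_limit_0_strong[of 1]) (use sg in auto)
    have lim': "(g \<longlongrightarrow> c n) (at_right 0)"
      using tendsto_mono[OF at_le[of "{0<..}" UNIV] lim] by simp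
    have ev: "eventually (\<lambda>x. g x = 0) (at_right (0::real))"
      unfolding eventually_at_right[OF zero_less_one]
      using z by (auto simp: g_def intro!: exI[of _ 1])
    have "(g \<longlongrightarrow> 0) (at_right 0)"
      using ev by (simp add: tendsto_eventually)
    from tendsto_unique[OF _ lim' this] show ?case by simp
  qed
  then show ?thesis by (auto simp: c_def fun_eq_iff)
qed

lemma poisson_pgf_sums:
  fixes P a u :: real
  shows "(\<lambda>k. (P * (exp (-a) * a^k / fact k)) * u^k) sums (P * exp (a*(u-1)))"
proof -
  have "(\<lambda>k. (a*u)^k /\<^sub>R fact k) sums exp (a*u)" by (rule exp_converges)
  then have "(\<lambda>k. P * exp (-a) * ((a*u)^k /\<^sub>R fact k)) sums (P * exp(-a) * exp(a*u))"
    by (rule sums_mult)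
  moreover have "exp (-a) * exp (a*u) = exp (a*(u-1))"
    by (simp add: exp_add[symmetric] algebra_simps)
  ultimately show ?thesis
    by (simp add: power_mult_distrib divide_inverse ac_simps)
qed

lemma poisson_summable:
  fixes P a x :: real
  shows "summable (\<lambda>k. (P * (exp (-a) * a^k / fact k)) * x^k)"
  using poisson_pgf_sums[of P a x] by (rule sums_summable)

lemma (in prob_space) pgf_sums:
  fixes D :: "'a \<Rightarrow> nat"
  assumes D: "D \<in> measurable M (count_space UNIV)" and B: "B \<in> events" and u: "0 \<le> u" "u \<le> 1"
  shows "(\<lambda>k. u^k * prob (B \<inter> (D -` {k} \<inter> space M))) sums (\<integral>x. indicator B x * u^(D x) \<partial>M)"
proof -
  define A where "A k = B \<inter> (D -` {k} \<inter> space M)" for k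
  define f where "f k x = u^k * indicator (A k) x" for k x
  have evA: "A k \<in> events" for k
    unfolding A_def using B measurable_sets[OF D, of "{k}"] by auto
  have int: "integrable M (f k)" for k
    unfolding f_def by (intro integrable_mult_right integrable_real_indicator evA) (simp add: emeasure_eq_measure)
  have Bsp: "B \<subseteq> space M" using B sets.sets_into_space by auto
  have fx: "f k x = (if k = D x then u^(D x) * indicator B x else 0)" for k x
    using Bsp by (auto simp: f_def A_def split: split_indicator)
  have sfx: "(\<lambda>k. f k x) sums (u^(D x) * indicator B x)" for x
    unfolding fx by (rule sums_single)
  have snx: "summable (\<lambda>k. norm (f k x))" for x
  proof -
    have "(\<lambda>k. norm (f k x)) = (\<lambda>k. if k = D x then norm (u^(D x) * indicator B x) else 0)"
      by (auto simp: fx fun_eq_iff)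
    moreover have "summable (\<lambda>k. if k = D x then norm (u^(D x) * indicator B x) else 0)"
      by (rule sums_summable[OF sums_single[of "D x" "\<lambda>_. norm (u^(D x) * indicator B x)"]])
    ultimately show ?thesis by simp
  qed
  have intf: "integral\<^sup>L M (f k) = u^k * prob (A k)" for k
    unfolding f_def using evA sets.sets_into_space[OF evA[of k]]
    by (simp add: Int_absorb2)
  have disj: "disjoint_family A" unfolding disjoint_family_on_def A_def by auto
  have sumP: "summable (\<lambda>k. prob (A k))"
    using measure_UNION[of A M] evA disj by (auto simp: emeasure_eq_measure intro: sums_summable)
  have intn: "(\<integral>x. norm (f k x) \<partial>M) = u^k * prob (A k)" for k
  proof -
    have "norm (f k x) = f k x" for x
      using u by (simp add: f_def abs_mult)
    then have "(\<integral>x. norm (f k x) \<partial>M) = integral\<^sup>L M (f k)"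
      by simp
    then show ?thesis using intf by simp
  qed
  have sumn: "summable (\<lambda>k. (\<integral>x. norm (f k x) \<partial>M))"
    unfolding intn
  proof (rule summable_comparison_test[OF _ sumP], intro exI allI impI)
    fix k :: nat
    have "u^k \<le> 1" using u by (simp add: power_le_one)
    then show "norm (u^k * prob (A k)) \<le> prob (A k)"
      using u by (simp add: mult_left_le_one_le abs_mult)
  qed
  have "(\<lambda>k. integral\<^sup>L M (f k)) sums (\<integral>x. (\<Sum>k. f k x) \<partial>M)"
    by (rule sums_integral[OF int]) (use snx sumn in auto)
  moreover have "(\<Sum>k. f k x) = indicator B x * u^(D x)" for x
    using sfx[of x] by (simp add: sums_iff mult.commute)
  then have "(\<integral>x. (\<Sum>k. f k x) \<partial>M) = (\<integral>x. indicator B x * u^(D x) \<partial>M)"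
    by simp
  ultimately show ?thesis unfolding intf A_def by simp
qed

lemma dotp_diff: "dotp L t - dotp L s = dotp L (t - s)"
  by (simp add: dotp_def sum_subtractf[symmetric] algebra_simps)

lemma dotp_zero[simp]: "dotp L 0 = 0"
  by (simp add: dotp_def)

locale mpp = prob_space M for M :: "'a measure" +
  fixes N :: "'d::finite \<Rightarrow> real \<Rightarrow> 'a \<Rightarrow> nat" and \<Lambda> :: "'d \<Rightarrow> real"
  assumes meas: "\<And>i s. 0 \<le> s \<Longrightarrow> N i s \<in> measurable M (count_space UNIV)"
    and counting: "\<And>i. simple_counting_process M (N i)"
    and indep: "indep_sets (\<lambda>i. proc_sigma M (N i) {0..}) UNIV"
begin

definition X :: "('d \<Rightarrow> real) \<Rightarrow> 'a \<Rightarrow> nat" where "X t \<omega> = (\<Sum>i\<in>UNIV. N i (t i) \<omega>)"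

abbreviation F where "F \<equiv> mp_filtration M N"

definition gen :: "('d \<Rightarrow> real) \<Rightarrow> 'a set set" where
  "gen t = (\<Union>i. {N i s -` A \<inter> space M | s A. 0 \<le> s \<and> s \<le> t i})"

lemma N0: "\<omega> \<in> space M \<Longrightarrow> N i 0 \<omega> = 0"
  using counting[of i] unfolding simple_counting_process_def by blast

lemma Nmono: "\<omega> \<in> space M \<Longrightarrow> 0 \<le> s \<Longrightarrow> s \<le> t \<Longrightarrow> N i s \<omega> \<le> N i t \<omega>"
  using counting[of i] unfolding simple_counting_process_def by blast

lemma Xmono: "\<omega> \<in> space M \<Longrightarrow> 0 \<le> s \<Longrightarrow> s \<le> t \<Longrightarrow> X s \<omega> \<le> X t \<omega>"
  unfolding X_def by (intro sum_mono Nmono) (auto simp: le_fun_def)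

lemma X0: "\<omega> \<in> space M \<Longrightarrow> X 0 \<omega> = 0"
  by (simp add: X_def N0)

lemma gen_Pow: "gen t \<subseteq> Pow (space M)"
  unfolding gen_def by auto

lemma gen_sets: "gen t \<subseteq> sets M"
  unfolding gen_def using meas by (auto intro!: measurable_sets)

lemma space_F[simp]: "space (F t) = space M"
  unfolding mp_filtration_def gen_def[symmetric] using gen_Pow by (simp add: space_measure_of)

lemma sets_F: "sets (F t) = sigma_sets (space M) (gen t)"
  unfolding mp_filtration_def gen_def[symmetric] using gen_Pow by (simp add: sets_measure_of)

lemma sets_F_sub: "sets (F t) \<subseteq> sets M"
  unfolding sets_F using gen_sets by (rule sets.sigma_sets_subset)

lemma F_mono: "s \<le> t \<Longrightarrow> sets (F s) \<subseteq> sets (F t)"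
  unfolding sets_F gen_def by (rule sigma_sets_subseteq) (force simp: le_fun_def intro: order_trans)

lemma gen_in_F: "A \<in> gen t \<Longrightarrow> A \<in> sets (F t)"
  unfolding sets_F by (rule sigma_sets.Basic)

lemma N_meas_F: "0 \<le> r \<Longrightarrow> r \<le> t i \<Longrightarrow> N i r \<in> measurable (F t) (count_space UNIV)"
  unfolding measurable_count_space_eq2_countable
  by (auto intro!: gen_in_F simp: gen_def) blast

lemma X_meas_F: "0 \<le> t \<Longrightarrow> X t \<in> measurable (F t) (count_space UNIV)"
  unfolding X_def[abs_def]
  by (intro measurable_nat_sum N_meas_F) (auto simp: le_fun_def)

lemma X_meas: "0 \<le> t \<Longrightarrow> X t \<in> measurable M (count_space UNIV)"
  unfolding X_def[abs_def]
  by (intro measurable_nat_sum meas) (auto simp: le_fun_def)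

lemma subalg: "subalgebra M (F t)"
  unfolding subalgebra_def using sets_F_sub by simp

lemma sfs: "sigma_finite_subalgebra M (F t)"
  by (rule finite_measure_subalgebra_is_sigma_finite)
     (simp add: finite_measure_subalgebra_def finite_measure_subalgebra_axioms_def subalg finite_measure_axioms)

lemma meas_F_M: "f \<in> measurable (F t) K \<Longrightarrow> f \<in> measurable M K"
  using measurable_from_subalg[OF subalg] by blast

end

context mpp begin

definition poi :: "real \<Rightarrow> nat \<Rightarrow> real" where "poi a k = exp (-a) * a^k / fact k"

definition dX :: "('d \<Rightarrow> real) \<Rightarrow> ('d \<Rightarrow> real) \<Rightarrow> 'a \<Rightarrow> nat" where
  "dX s t \<omega> = X t \<omega> - X s \<omega>"

definition Q :: "('d \<Rightarrow> real) \<Rightarrow> ('d \<Rightarrow> real) \<Rightarrow> bool" where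
  "Q s t \<longleftrightarrow> (\<forall>A\<in>sets (F s). \<forall>k. prob (A \<inter> (dX s t -` {k} \<inter> space M)) = prob A * poi (dotp \<Lambda> t - dotp \<Lambda> s) k)"

definition E :: "real \<Rightarrow> ('d \<Rightarrow> real) \<Rightarrow> 'a \<Rightarrow> real" where
  "E u t \<omega> = exp ((\<Sum>i\<in>UNIV. real (N i (t i) \<omega>)) * ln u - dotp \<Lambda> t * (u - 1))"

lemma E_eq: "0 < u \<Longrightarrow> E u t \<omega> = u^(X t \<omega>) * exp (- (dotp \<Lambda> t * (u - 1)))"
proof -
  assume u: "0 < u"
  have 1: "(\<Sum>i\<in>UNIV. real (N i (t i) \<omega>)) = real (X t \<omega>)" by (simp add: X_def)
  have 2: "exp (real n * ln u) = u ^ n" for n using u by (simp add: exp_of_nat_mult)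
  show ?thesis unfolding E_def 1 exp_diff 2 by (simp add: exp_minus divide_inverse)
qed

lemma X_meas_F_le: "0 \<le> s \<Longrightarrow> s \<le> t \<Longrightarrow> X s \<in> measurable (F t) (count_space UNIV)"
  unfolding measurable_count_space_eq2_countable
  using X_meas_F[of s] F_mono[of s t] by (auto simp: measurable_count_space_eq2_countable)

lemma dX_meas_F': "0 \<le> s \<Longrightarrow> s \<le> t \<Longrightarrow> dX s t \<in> measurable (F t) (count_space UNIV)"
  unfolding dX_def[abs_def]
  by (intro measurable_nat_diff X_meas_F X_meas_F_le) (auto intro: order_trans)

lemma dX_meas: "0 \<le> s \<Longrightarrow> s \<le> t \<Longrightarrow> dX s t \<in> measurable M (count_space UNIV)"
  by (rule meas_F_M[OF dX_meas_F'])

lemma indep_from_singletons: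
  fixes D :: "'a \<Rightarrow> nat"
  assumes S: "S \<subseteq> events" "Int_stable S" and D: "D \<in> measurable M (count_space UNIV)"
   and eq: "\<And>A k. A \<in> S \<Longrightarrow> prob (A \<inter> (D -` {k} \<inter> space M)) = prob A * prob (D -` {k} \<inter> space M)"
  shows "indep_set (sigma_sets (space M) S) (sigma_sets (space M) {D -` B \<inter> space M | B. True})"
proof -
  let ?T = "insert {} {D -` {k} \<inter> space M | k. True}"
  have T: "?T \<subseteq> events" using measurable_sets[OF D] by auto
  have "indep_set S ?T"
    by (rule indep_setI[OF S(1) T]) (auto simp: eq)
  from indep_set_sigma_sets[OF this S(2) Int_stable_singletons]
  have *: "indep_set (sigma_sets (space M) S) (sigma_sets (space M) ?T)" .
  have "{D -` B \<inter> space M | B. True} \<subseteq> sigma_sets (space M) ?T"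
    using vimage_in_sigma_singletons by blast
  then have **: "sigma_sets (space M) {D -` B \<inter> space M | B. True} \<subseteq> sigma_sets (space M) ?T"
    by (rule sigma_sets_mono)
  show ?thesis
  proof -
    have a: "sigma_sets (space M) S \<subseteq> events" "sigma_sets (space M) ?T \<subseteq> events"
      and b: "\<And>a b. a \<in> sigma_sets (space M) S \<Longrightarrow> b \<in> sigma_sets (space M) ?T \<Longrightarrow> prob (a \<inter> b) = prob a * prob b"
      using indep_setD_ev1[OF *] indep_setD_ev2[OF *] indep_setD[OF *] by auto
    show ?thesis
    proof (rule indep_setI[OF a(1) order_trans[OF ** a(2)]])
      fix x y assume "x \<in> sigma_sets (space M) S" "y \<in> sigma_sets (space M) {D -` B \<inter> space M |B. True}"
      then show "prob (x \<inter> y) = prob x * prob y" by (rule b[OF _ subsetD[OF **]])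
    qed
  qed
qed

lemma Q_indep:
  assumes st: "0 \<le> s" "s \<le> t" and q: "Q s t"
  shows "indep_set (sets (F s)) (sigma_sets (space M) {dX s t -` B \<inter> space M | B. True})"
    and "\<And>k. prob (dX s t -` {k} \<inter> space M) = poi (dotp \<Lambda> t - dotp \<Lambda> s) k"
proof -
  have sp: "space M \<in> sets (F s)" using sets.top[of "F s"] by simp
  show pk: "prob (dX s t -` {k} \<inter> space M) = poi (dotp \<Lambda> t - dotp \<Lambda> s) k" for k
  proof -
    have "prob (space M \<inter> (dX s t -` {k} \<inter> space M)) = prob (space M) * poi (dotp \<Lambda> t - dotp \<Lambda> s) k"
      using q sp unfolding Q_def by blast
    then show ?thesis by (simp add: Int_absorb1 prob_space)
  qed
  have "indep_set (sigma_sets (space M) (sets (F s))) (sigma_sets (space M) {dX s t -` B \<inter> space M | B. True})"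
  proof (rule indep_from_singletons)
    show "sets (F s) \<subseteq> events" by (rule sets_F_sub)
    show "Int_stable (sets (F s))" by (rule Int_stableI) (rule sets.Int)
    show "dX s t \<in> measurable M (count_space UNIV)" by (rule dX_meas[OF st])
    show "prob (A \<inter> (dX s t -` {k} \<inter> space M)) = prob A * prob (dX s t -` {k} \<inter> space M)"
      if "A \<in> sets (F s)" for A k
      using q that unfolding Q_def pk by blast
  qed
  moreover have "sigma_sets (space M) (sets (F s)) = sets (F s)"
    using sets.sigma_sets_eq[of "F s"] by simp
  ultimately show "indep_set (sets (F s)) (sigma_sets (space M) {dX s t -` B \<inter> space M | B. True})"
    by (simp only:)
qed

lemma E_meas_F: "0 \<le> t \<Longrightarrow> 0 < u \<Longrightarrow> E u t \<in> borel_measurable (F t)"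
proof -
  assume t0: "0 \<le> t" and u: "0 < u"
  have "E u t = (\<lambda>\<omega>. (\<lambda>n. u^n * exp (- (dotp \<Lambda> t * (u - 1)))) (X t \<omega>))"
    using E_eq[OF u] by (auto simp: fun_eq_iff)
  also have "\<dots> \<in> borel_measurable (F t)"
    by (rule measurable_compose[OF X_meas_F[OF t0]]) simp
  finally show ?thesis .
qed

lemma E_int: "0 \<le> t \<Longrightarrow> 0 < u \<Longrightarrow> u \<le> 1 \<Longrightarrow> integrable M (E u t)"
proof -
  assume t0: "0 \<le> t" and u: "0 < u" "u \<le> 1"
  have b: "norm (E u t x) \<le> exp (- (dotp \<Lambda> t * (u - 1)))" for x
  proof -
    have "u ^ X t x \<le> 1" using u by (simp add: power_le_one)
    then show ?thesis using u by (simp add: E_eq abs_mult)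
  qed
  show ?thesis
    by (rule integrable_const_bound[OF AE_I2[OF b]]) (rule meas_F_M[OF E_meas_F[OF t0 u(1)]])
qed

lemma Q_mart:
  assumes st: "0 \<le> s" "s \<le> t" and q: "Q s t" and u: "0 < u" "u \<le> 1"
  shows "AE \<omega> in M. real_cond_exp M (F s) (E u t) \<omega> = E u s \<omega>"
proof -
  interpret S: sigma_finite_subalgebra M "F s" by (rule sfs)
  have t0: "0 \<le> t" using st by (rule order_trans)
  define a where "a = dotp \<Lambda> t - dotp \<Lambda> s"
  define D where "D = dX s t"
  have Dm: "D \<in> measurable M (count_space UNIV)" unfolding D_def by (rule dX_meas[OF st])
  have ind: "indep_set (sets (F s)) (sigma_sets (space M) {D -` B \<inter> space M | B. True})"
    unfolding D_def by (rule Q_indep(1)[OF st q])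
  have pk: "prob (D -` {k} \<inter> space M) = poi a k" for k
    unfolding D_def a_def by (rule Q_indep(2)[OF st q])
  define h where "h x = indicator (space M) x * u^(D x)" for x
  have um: "(\<lambda>x. u^(D x)) \<in> borel_measurable M"
    by (rule measurable_compose[OF Dm]) simp
  have hm: "h \<in> borel_measurable M"
    unfolding h_def by (intro borel_measurable_times borel_measurable_indicator sets.top um)
  have hb: "norm (h x) \<le> 1" for x
    using u by (simp add: h_def abs_mult power_le_one indicator_def)
  have hint: "integrable M h"
    by (rule integrable_const_bound[OF AE_I2[OF hb] hm])
  have Eh: "integral\<^sup>L M h = exp (a*(u-1))"
  proof -
    have "(\<lambda>k. u^k * prob (space M \<inter> (D -` {k} \<inter> space M))) sums integral\<^sup>L M h"
      unfolding h_def by (rule pgf_sums[OF Dm sets.top]) (use u in auto)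
    moreover have "(\<lambda>k. u^k * prob (space M \<inter> (D -` {k} \<inter> space M))) = (\<lambda>k. (1 * poi a k) * u^k)"
    proof
      fix k
      have "space M \<inter> (D -` {k} \<inter> space M) = D -` {k} \<inter> space M" by blast
      then show "u^k * prob (space M \<inter> (D -` {k} \<inter> space M)) = (1 * poi a k) * u^k"
        by (simp add: pk)
    qed
    moreover have "(\<lambda>k. (1 * poi a k) * u^k) sums (1 * exp (a*(u-1)))"
      unfolding poi_def by (rule poisson_pgf_sums)
    ultimately show ?thesis by (simp add: sums_iff)
  qed
  show ?thesis
  proof (rule S.real_cond_exp_charact)
    fix A assume A: "A \<in> sets (F s)"
    have AM: "A \<in> sets M" using A sets_F_sub by auto
    define g where "g x = indicator A x * E u s x" for x
    have gm: "g \<in> borel_measurable (F s)"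
      unfolding g_def using A E_meas_F[OF st(1) u(1)]
      by (intro borel_measurable_times borel_measurable_indicator) auto
    have gmM: "g \<in> borel_measurable M" by (rule meas_F_M[OF gm])
    have gint: "integrable M g"
      using integrable_mult_indicator[OF AM E_int[OF st(1) u]] by (simp add: g_def[abs_def])
    have iv: "indep_var borel g borel h"
      unfolding indep_var_eq
    proof (intro conjI)
      show "random_variable borel g" "random_variable borel h" using gmM hm by auto
      have 1: "sigma_sets (space M) {g -` B \<inter> space M | B. B \<in> sets borel} \<subseteq> sets (F s)"
        using sets.sigma_sets_subset[of "{g -` B \<inter> space M | B. B \<in> sets borel}" "F s"]
          measurable_sets[OF gm] by auto
      have hD: "h -` B \<inter> space M = D -` {n. u^n \<in> B} \<inter> space M" for B
        by (auto simp: h_def)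
      have 2: "sigma_sets (space M) {h -` B \<inter> space M | B. B \<in> sets borel}
          \<subseteq> sigma_sets (space M) {D -` B \<inter> space M | B. True}"
        by (rule sigma_sets_subseteq) (use hD in blast)
      have ev1: "sets (F s) \<subseteq> events" and ev2: "sigma_sets (space M) {D -` B \<inter> space M | B. True} \<subseteq> events"
        using indep_setD_ev1[OF ind] indep_setD_ev2[OF ind] by auto
      show "indep_set (sigma_sets (space M) {g -` B \<inter> space M | B. B \<in> sets borel})
          (sigma_sets (space M) {h -` B \<inter> space M | B. B \<in> sets borel})"
      proof (rule indep_setI[OF order_trans[OF 1 ev1] order_trans[OF 2 ev2]])
        fix x y assume "x \<in> sigma_sets (space M) {g -` B \<inter> space M | B. B \<in> sets borel}"
          "y \<in> sigma_sets (space M) {h -` B \<inter> space M | B. B \<in> sets borel}"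
        then show "prob (x \<inter> y) = prob x * prob y"
          by (rule indep_setD[OF ind subsetD[OF 1] subsetD[OF 2]])
      qed
    qed
    have prod: "integral\<^sup>L M (\<lambda>x. g x * h x) = integral\<^sup>L M g * integral\<^sup>L M h"
      by (rule indep_var_lebesgue_integral[OF iv gint hint])
    have e: "exp (- (dotp \<Lambda> t * (u - 1))) = exp (-(a*(u-1))) * exp (- (dotp \<Lambda> s * (u - 1)))"
      by (simp add: a_def exp_add[symmetric] algebra_simps)
    have pt: "indicator A x * E u t x = exp (-(a*(u-1))) * (g x * h x)" for x
    proof (cases "x \<in> A")
      case True
      then have xs: "x \<in> space M" using AM sets.sets_into_space by auto
      have "X t x = X s x + D x" using Xmono[OF xs st] by (simp add: D_def dX_def)
      then show ?thesis using True xs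
        by (simp add: g_def h_def E_eq[OF u(1)] power_add e)
    next
      case False then show ?thesis by (simp add: g_def)
    qed
    have "(\<integral>x\<in>A. E u t x \<partial>M) = (\<integral>x. indicator A x * E u t x \<partial>M)"
      by (simp add: set_lebesgue_integral_def)
    also have "\<dots> = exp (-(a*(u-1))) * (integral\<^sup>L M g * integral\<^sup>L M h)"
      by (simp add: pt prod)
    also have "\<dots> = integral\<^sup>L M g"
      using Eh by (simp add: exp_minus field_simps exp_add[symmetric])
    also have "\<dots> = (\<integral>x\<in>A. E u s x \<partial>M)"
      by (simp add: set_lebesgue_integral_def g_def[abs_def])
    finally show "(\<integral>x\<in>A. E u t x \<partial>M) = (\<integral>x\<in>A. E u s x \<partial>M)" .
  next
    show "integrable M (E u t)" by (rule E_int[OF t0 u])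
    show "integrable M (E u s)" by (rule E_int[OF st(1) u])
    show "E u s \<in> borel_measurable (F s)" by (rule E_meas_F[OF st(1) u(1)])
  qed
qed

end

context mpp begin

lemma mart_Q:
  assumes st: "0 \<le> s" "s \<le> t"
    and mart: "\<And>u. 0 < u \<Longrightarrow> u \<le> 1 \<Longrightarrow> AE \<omega> in M. real_cond_exp M (F s) (E u t) \<omega> = E u s \<omega>"
  shows "Q s t"
proof -
  interpret S: sigma_finite_subalgebra M "F s" by (rule sfs)
  have t0: "0 \<le> t" using st by (rule order_trans)
  define a where "a = dotp \<Lambda> t - dotp \<Lambda> s"
  define D where "D = dX s t"
  have Dm: "D \<in> measurable M (count_space UNIV)" unfolding D_def by (rule dX_meas[OF st])
  have XsF: "X s \<in> measurable (F s) (count_space UNIV)" by (rule X_meas_F[OF st(1)])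
  have e: "exp (- (dotp \<Lambda> t * (u - 1))) = exp (-(a*(u-1))) * exp (- (dotp \<Lambda> s * (u - 1)))" for u
    by (simp add: a_def exp_add[symmetric] algebra_simps)
  have step1: "(\<integral>x. indicator B x * u^(D x) \<partial>M) = exp (a*(u-1)) * prob B"
    if B: "B = A \<inter> (X s -` {j} \<inter> space M)" "A \<in> sets (F s)" and u: "0 < u" "u \<le> 1" for A B j u
  proof -
    have BF: "B \<in> sets (F s)"
      using B measurable_sets[OF XsF, of "{j}"] by auto
    have BM: "B \<in> sets M" using BF sets_F_sub by auto
    have int: "integrable M (E u t)" by (rule E_int[OF t0 u])
    have "(\<integral>x\<in>B. E u t x \<partial>M) = (\<integral>x\<in>B. real_cond_exp M (F s) (E u t) x \<partial>M)"
      by (rule S.real_cond_exp_intA[OF int BF])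
    also have "\<dots> = (\<integral>x\<in>B. E u s x \<partial>M)"
      unfolding set_lebesgue_integral_def
    proof (rule integral_cong_AE)
      show "(\<lambda>x. indicator B x *\<^sub>R real_cond_exp M (F s) (E u t) x) \<in> borel_measurable M"
        using BM borel_measurable_cond_exp2 by (intro borel_measurable_scaleR borel_measurable_indicator) auto
      show "(\<lambda>x. indicator B x *\<^sub>R E u s x) \<in> borel_measurable M"
        using BM meas_F_M[OF E_meas_F[OF st(1) u(1)]] by (intro borel_measurable_scaleR borel_measurable_indicator) auto
      show "AE x in M. indicator B x *\<^sub>R real_cond_exp M (F s) (E u t) x = indicator B x *\<^sub>R E u s x"
        using mart[OF u] by eventually_elim simp
    qed
    finally have eq: "(\<integral>x\<in>B. E u t x \<partial>M) = (\<integral>x\<in>B. E u s x \<partial>M)" .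
    have p1: "indicator B x * E u t x = (u^j * exp (- (dotp \<Lambda> t * (u - 1)))) * (indicator B x * u^(D x))" for x
    proof (cases "x \<in> B")
      case True
      then have xs: "x \<in> space M" and xj: "X s x = j" using B by auto
      have "X t x = X s x + D x" using Xmono[OF xs st] by (simp add: D_def dX_def)
      then show ?thesis using True xj by (simp add: E_eq[OF u(1)] power_add)
    qed simp
    have p2: "indicator B x * E u s x = (u^j * exp (- (dotp \<Lambda> s * (u - 1)))) * indicator B x" for x
    proof (cases "x \<in> B")
      case True
      then have xj: "X s x = j" using B by auto
      then show ?thesis using True by (simp add: E_eq[OF u(1)])
    qed simp
    have "(\<integral>x\<in>B. E u t x \<partial>M) = (u^j * exp (- (dotp \<Lambda> t * (u - 1)))) * (\<integral>x. indicator B x * u^(D x) \<partial>M)"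
      by (simp add: set_lebesgue_integral_def p1)
    moreover have "(\<integral>x\<in>B. E u s x \<partial>M) = (u^j * exp (- (dotp \<Lambda> s * (u - 1)))) * prob B"
      using BM by (simp add: set_lebesgue_integral_def p2)
    ultimately have "(u^j * exp (- (dotp \<Lambda> t * (u - 1)))) * (\<integral>x. indicator B x * u^(D x) \<partial>M)
        = (u^j * exp (- (dotp \<Lambda> s * (u - 1)))) * prob B" using eq by metis
    then have "(u^j * exp (- (dotp \<Lambda> s * (u - 1)))) * (exp (-(a*(u-1))) * (\<integral>x. indicator B x * u^(D x) \<partial>M))
        = (u^j * exp (- (dotp \<Lambda> s * (u - 1)))) * prob B" unfolding e by (simp add: ac_simps)
    then have "exp (-(a*(u-1))) * (\<integral>x. indicator B x * u^(D x) \<partial>M) = prob B"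
      using u by simp
    then have "exp (a*(u-1)) * (exp (-(a*(u-1))) * (\<integral>x. indicator B x * u^(D x) \<partial>M)) = exp (a*(u-1)) * prob B"
      by simp
    then show ?thesis by (simp only: mult.assoc[symmetric] exp_minus_inverse mult_1)
  qed
  have step2: "prob (B \<inter> (D -` {k} \<inter> space M)) = prob B * poi a k"
    if B: "B = A \<inter> (X s -` {j} \<inter> space M)" "A \<in> sets (F s)" for A B j k
  proof -
    have BF: "B \<in> sets (F s)"
      using B measurable_sets[OF XsF, of "{j}"] by auto
    have BM: "B \<in> sets M" using BF sets_F_sub by auto
    have "(\<lambda>k. prob (B \<inter> (D -` {k} \<inter> space M))) = (\<lambda>k. prob B * poi a k)"
    proof (rule pgf_unique)
      fix x :: real assume x: "\<bar>x\<bar> < 1"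
      show "summable (\<lambda>k. prob B * poi a k * x^k)"
        unfolding poi_def by (rule poisson_summable)
      show "summable (\<lambda>k. prob (B \<inter> (D -` {k} \<inter> space M)) * x^k)"
      proof (rule summable_comparison_test[OF _ summable_geometric[of "\<bar>x\<bar>"]], intro exI allI impI)
        fix k :: nat
        have "prob (B \<inter> (D -` {k} \<inter> space M)) \<le> 1" by simp
        then show "norm (prob (B \<inter> (D -` {k} \<inter> space M)) * x^k) \<le> \<bar>x\<bar>^k"
          by (simp add: abs_mult power_abs mult_left_le_one_le)
      qed (use x in simp)
    next
      fix u :: real assume u: "0 < u" "u < 1"
      have "(\<lambda>k. u^k * prob (B \<inter> (D -` {k} \<inter> space M))) sums (\<integral>x. indicator B x * u^(D x) \<partial>M)"
        by (rule pgf_sums[OF Dm BM]) (use u in auto)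
      then have "(\<lambda>k. prob (B \<inter> (D -` {k} \<inter> space M)) * u^k) sums (exp (a*(u-1)) * prob B)"
        using step1[OF B, of u] u by (simp add: mult.commute)
      moreover have "(\<lambda>k. prob B * (exp (-a) * a^k / fact k) * u^k) sums (prob B * exp (a*(u-1)))"
        by (rule poisson_pgf_sums)
      ultimately show "(\<Sum>k. prob (B \<inter> (D -` {k} \<inter> space M)) * u^k) = (\<Sum>k. prob B * poi a k * u^k)"
        unfolding poi_def by (simp add: sums_iff mult.commute)
    qed
    then show ?thesis by (simp add: fun_eq_iff)
  qed
  show ?thesis
    unfolding Q_def a_def[symmetric] D_def[symmetric]
  proof (intro ballI allI)
    fix A k assume A: "A \<in> sets (F s)"
    have AM: "A \<in> sets M" using A sets_F_sub by auto
    define Bj where "Bj j = A \<inter> (X s -` {j} \<inter> space M)" for j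
    have BjM: "Bj j \<in> sets M" for j
      using A measurable_sets[OF XsF, of "{j}"] sets_F_sub unfolding Bj_def by auto
    have disj: "disjoint_family Bj" unfolding disjoint_family_on_def Bj_def by auto
    have UA: "(\<Union>j. Bj j) = A" using sets.sets_into_space[OF AM] unfolding Bj_def by auto
    have Dk: "D -` {k} \<inter> space M \<in> sets M" using measurable_sets[OF Dm] by simp
    have s1: "(\<lambda>j. prob (Bj j)) sums prob A"
      using measure_UNION[of Bj M] BjM disj UA by (auto simp: emeasure_eq_measure)
    have disj2: "disjoint_family (\<lambda>j. Bj j \<inter> (D -` {k} \<inter> space M))"
      using disj unfolding disjoint_family_on_def by auto
    have U2: "(\<Union>j. Bj j \<inter> (D -` {k} \<inter> space M)) = A \<inter> (D -` {k} \<inter> space M)" using UA by auto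
    have s2: "(\<lambda>j. prob (Bj j \<inter> (D -` {k} \<inter> space M))) sums prob (A \<inter> (D -` {k} \<inter> space M))"
      using measure_UNION[of "\<lambda>j. Bj j \<inter> (D -` {k} \<inter> space M)" M] BjM Dk disj2 U2
      by (auto simp: emeasure_eq_measure)
    have "(\<lambda>j. prob (Bj j \<inter> (D -` {k} \<inter> space M))) = (\<lambda>j. prob (Bj j) * poi a k)"
      using step2[OF Bj_def A] by (simp add: fun_eq_iff)
    with s2 have "(\<lambda>j. prob (Bj j) * poi a k) sums prob (A \<inter> (D -` {k} \<inter> space M))" by simp
    moreover have "(\<lambda>j. prob (Bj j) * poi a k) sums (prob A * poi a k)"
      by (rule sums_mult2[OF s1])
    ultimately show "prob (A \<inter> (D -` {k} \<inter> space M)) = prob A * poi a k"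
      by (rule sums_unique2)
  qed
qed

end

context mpp begin

lemma dX_vimage_X0: "0 \<le> t \<Longrightarrow> dX 0 t -` {k} \<inter> space M = X t -` {k} \<inter> space M"
  by (auto simp: dX_def X0)

lemma prob_X: assumes Qall: "\<And>s t. 0 \<le> s \<Longrightarrow> s \<le> t \<Longrightarrow> Q s t" and t: "0 \<le> t"
  shows "prob (X t -` {k} \<inter> space M) = poi (dotp \<Lambda> t) k"
  using Q_indep(2)[OF order_refl t Qall[OF order_refl t], of k] t by (simp add: dX_vimage_X0)

lemma Q_chain:
  assumes Qall: "\<And>s t. 0 \<le> s \<Longrightarrow> s \<le> t \<Longrightarrow> Q s t"
    and c0: "c 0 = 0" and cm: "\<forall>k<m. c k < c (Suc k)"
  shows "indep_vars (\<lambda>_. count_space UNIV) (\<lambda>k \<omega>. X (c (Suc k)) \<omega> - X (c k) \<omega>) {..<m}"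
proof -
  have cle: "k < m \<Longrightarrow> c k \<le> c (Suc k)" for k using cm by (simp add: less_imp_le)
  have cpos: "k \<le> m \<Longrightarrow> 0 \<le> c k" for k
  proof (induction k)
    case 0 then show ?case by (simp add: c0)
  next
    case (Suc k) then show ?case using cle[of k] by (auto intro: order_trans)
  qed
  define \<Delta> where "\<Delta> k = dX (c k) (c (Suc k))" for k
  have \<Delta>eq: "(\<lambda>k \<omega>. X (c (Suc k)) \<omega> - X (c k) \<omega>) = \<Delta>" by (simp add: fun_eq_iff \<Delta>_def dX_def)
  have \<Delta>m: "k < m \<Longrightarrow> \<Delta> k \<in> measurable M (count_space UNIV)" for k
    unfolding \<Delta>_def using cpos[of k] cle[of k] by (intro dX_meas) auto
  have \<Delta>mF: "k < m \<Longrightarrow> \<Delta> k \<in> measurable (F (c (Suc k))) (count_space UNIV)" for k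
    unfolding \<Delta>_def using cpos[of k] cle[of k] by (intro dX_meas_F') auto
  define T where "T k = insert {} {\<Delta> k -` {a} \<inter> space M | a. True}" for k
  have key: "n \<le> m \<Longrightarrow> J \<subseteq> {..<n} \<Longrightarrow> (\<forall>j\<in>J. A j \<in> T j) \<Longrightarrow>
      (space M \<inter> (\<Inter>j\<in>J. A j)) \<in> sets (F (c n)) \<and> prob (space M \<inter> (\<Inter>j\<in>J. A j)) = (\<Prod>j\<in>J. prob (A j))"
    for n J A
  proof (induction n arbitrary: J)
    case 0
    then have "J = {}" by auto
    then show ?case using sets.top[of "F (c 0)"] by (simp add: prob_space)
  next
    case (Suc n)
    have nm: "n < m" using Suc by simp
    define J' where "J' = J - {n}"
    have J': "J' \<subseteq> {..<n}" using Suc.prems unfolding J'_def by auto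
    from Suc.IH[OF _ J'] Suc.prems nm
    have IH: "space M \<inter> (\<Inter>j\<in>J'. A j) \<in> sets (F (c n))"
      "prob (space M \<inter> (\<Inter>j\<in>J'. A j)) = (\<Prod>j\<in>J'. prob (A j))"
      unfolding J'_def by auto
    have mono: "sets (F (c n)) \<subseteq> sets (F (c (Suc n)))" by (rule F_mono[OF cle[OF nm]])
    have finJ: "finite J" using Suc.prems(2) finite_subset by blast
    show ?case
    proof (cases "n \<in> J")
      case False
      then have "J = J'" unfolding J'_def by auto
      then show ?thesis using IH mono by auto
    next
      case True
      define E' where "E' = space M \<inter> (\<Inter>j\<in>J'. A j)"
      have split: "space M \<inter> (\<Inter>j\<in>J. A j) = E' \<inter> A n"
        using True unfolding E'_def J'_def by auto
      have prodsplit: "(\<Prod>j\<in>J. prob (A j)) = prob (A n) * (\<Prod>j\<in>J'. prob (A j))"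
        using True finJ unfolding J'_def by (simp add: prod.remove)
      have An: "A n \<in> T n" using Suc.prems True by auto
      show ?thesis
      proof (cases "A n = {}")
        case True
        then show ?thesis using split prodsplit by simp
      next
        case False
        then obtain a where a: "A n = \<Delta> n -` {a} \<inter> space M" using An unfolding T_def by auto
        have E'F: "E' \<in> sets (F (c n))" unfolding E'_def by (rule IH(1))
        have q: "Q (c n) (c (Suc n))" using cpos[of n] nm cle[OF nm] by (intro Qall) auto
        have AnF: "A n \<in> sets (F (c (Suc n)))"
          unfolding a using measurable_sets[OF \<Delta>mF[OF nm], of "{a}"] by simp
        have "prob (E' \<inter> A n) = prob E' * poi (dotp \<Lambda> (c (Suc n)) - dotp \<Lambda> (c n)) a"
          using q E'F unfolding Q_def a \<Delta>_def by blast
        also have "poi (dotp \<Lambda> (c (Suc n)) - dotp \<Lambda> (c n)) a = prob (A n)"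
          unfolding a \<Delta>_def
          by (rule Q_indep(2)[symmetric, OF cpos[of n] cle[OF nm] q]) (use nm in simp)
        finally have "prob (E' \<inter> A n) = prob E' * prob (A n)" .
        then show ?thesis using split prodsplit IH(2) E'F mono AnF
          unfolding E'_def by (auto simp: ac_simps)
      qed
    qed
  qed
  have Tev: "k < m \<Longrightarrow> T k \<subseteq> events" for k
    unfolding T_def using measurable_sets[OF \<Delta>m] by auto
  have indT: "indep_sets T {..<m}"
  proof (rule indep_setsI)
    show "T k \<subseteq> events" if "k \<in> {..<m}" for k using Tev that by simp
  next
    fix A J assume J: "J \<noteq> {}" "J \<subseteq> {..<m}" "finite J" and A: "\<forall>j\<in>J. A j \<in> T j"
    have sub: "A j \<subseteq> space M" if "j \<in> J" for j
    proof -
      have "A j \<in> T j" "T j \<subseteq> events" using A that J(2) Tev by auto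
      then show ?thesis using sets.sets_into_space by blast
    qed
    have "(\<Inter>j\<in>J. A j) = space M \<inter> (\<Inter>j\<in>J. A j)"
      using J(1) sub by blast
    then show "prob (\<Inter>j\<in>J. A j) = (\<Prod>j\<in>J. prob (A j))"
      using key[OF order_refl J(2) A] by simp
  qed
  have indT': "indep_sets (\<lambda>k. sigma_sets (space M) (T k)) {..<m}"
    by (rule indep_sets_sigma[OF indT]) (unfold T_def, rule Int_stable_singletons)
  have "indep_sets (\<lambda>k. {\<Delta> k -` B \<inter> space M | B. B \<in> sets (count_space UNIV)}) {..<m}"
    by (rule indep_sets_mono_sets[OF indT']) (unfold T_def, use vimage_in_sigma_singletons in blast)
  then show ?thesis
    unfolding \<Delta>eq indep_vars_def2 using \<Delta>m by auto
qed

lemma Q_poisson: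
  assumes Qall: "\<And>s t. 0 \<le> s \<Longrightarrow> s \<le> t \<Longrightarrow> Q s t"
  shows "mp_poisson_process M \<Lambda> X"
  unfolding mp_poisson_process_def
proof (intro conjI allI impI ballI)
  show "X t \<in> measurable M (count_space UNIV)" if "0 \<le> t" for t using X_meas that .
  show "X 0 \<omega> = 0" if "\<omega> \<in> space M" for \<omega> using X0 that .
  show "X s \<omega> \<le> X t \<omega>" if "\<omega> \<in> space M" "0 \<le> s \<and> s \<le> t" for \<omega> s t using Xmono that by blast
  show "indep_vars (\<lambda>_. count_space UNIV) (\<lambda>k \<omega>. X (c (Suc k)) \<omega> - X (c k) \<omega>) {..<m}"
    if "c 0 = 0 \<and> (\<forall>k<m. c k < c (Suc k))" for m c
    using Q_chain[OF Qall] that by blast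
next
  fix s t :: "'d \<Rightarrow> real" assume st: "0 \<le> s \<and> s \<le> t"
  have ts: "0 \<le> t - s" using st by simp
  have m1: "(\<lambda>\<omega>. X t \<omega> - X s \<omega>) \<in> measurable M (count_space UNIV)"
    using dX_meas[of s t] st by (simp add: dX_def[abs_def])
  have m2: "X (t - s) \<in> measurable M (count_space UNIV)" using X_meas[OF ts] .
  show "distr M (count_space UNIV) (\<lambda>\<omega>. X t \<omega> - X s \<omega>) = distr M (count_space UNIV) (X (t - s))"
  proof (rule measure_eqI_countable[of _ UNIV])
    fix a :: nat
    have "emeasure (distr M (count_space UNIV) (\<lambda>\<omega>. X t \<omega> - X s \<omega>)) {a} = prob (dX s t -` {a} \<inter> space M)"
      using m1 by (simp add: emeasure_distr emeasure_eq_measure dX_def[abs_def])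
    also have "\<dots> = poi (dotp \<Lambda> t - dotp \<Lambda> s) a"
      using st Q_indep(2)[of s t] Qall[of s t] by simp
    also have "\<dots> = prob (X (t - s) -` {a} \<inter> space M)"
      using prob_X[OF Qall ts] by (simp add: dotp_diff)
    also have "\<dots> = emeasure (distr M (count_space UNIV) (X (t - s))) {a}"
      using m2 by (simp add: emeasure_distr emeasure_eq_measure)
    finally show "emeasure (distr M (count_space UNIV) (\<lambda>\<omega>. X t \<omega> - X s \<omega>)) {a} =
        emeasure (distr M (count_space UNIV) (X (t - s))) {a}" .
  qed auto
next
  fix t :: "'d \<Rightarrow> real" and k :: nat assume t: "0 \<le> t"
  have "{\<omega> \<in> space M. X t \<omega> = k} = X t -` {k} \<inter> space M" by auto
  then show "prob {\<omega> \<in> space M. X t \<omega> = k} = exp (- dotp \<Lambda> t) * dotp \<Lambda> t ^ k / fact k"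
    using prob_X[OF Qall t] by (simp add: poi_def)
qed

end

context mpp begin

lemma Xe: "\<omega> \<in> space M \<Longrightarrow> X (\<lambda>j. if j = i then r else 0) \<omega> = N i r \<omega>"
proof -
  assume w: "\<omega> \<in> space M"
  have "X (\<lambda>j. if j = i then r else 0) \<omega> = (\<Sum>j\<in>UNIV. if j = i then N i r \<omega> else 0)"
    unfolding X_def by (intro sum.cong refl) (auto simp: N0[OF w])
  then show ?thesis by simp
qed

lemma Int_stable_vimage: "Int_stable {f -` B \<inter> S | B. True}"
proof (rule Int_stableI)
  fix x y assume "x \<in> {f -` B \<inter> S | B. True}" "y \<in> {f -` B \<inter> S | B. True}"
  then obtain B1 B2 where "x = f -` B1 \<inter> S" "y = f -` B2 \<inter> S" by blast
  then have "x \<inter> y = f -` (B1 \<inter> B2) \<inter> S" by auto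
  then show "x \<inter> y \<in> {f -` B \<inter> S | B. True}" by blast
qed

lemma CL:
  assumes P: "mp_poisson_process M \<Lambda> X"
    and R: "finite R" "R \<subseteq> {0..a}" and ab: "0 \<le> a" "a < b"
  shows "indep_set (sigma_sets (space M) {N i r -` C \<inter> space M | r C. r \<in> R})
                   {(\<lambda>\<omega>. N i b \<omega> - N i a \<omega>) -` B \<inter> space M | B. True}"
proof -
  have Pchain: "\<And>m c. c 0 = 0 \<Longrightarrow> (\<forall>k<m. c k < c (Suc k)) \<Longrightarrow>
      indep_vars (\<lambda>_. count_space UNIV) (\<lambda>k \<omega>. X (c (Suc k)) \<omega> - X (c k) \<omega>) {..<m}"
    using P unfolding mp_poisson_process_def by blast
  define S where "S = insert 0 (insert a R)"
  have finS: "finite S" using R by (simp add: S_def)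
  have S_range: "S \<subseteq> {0..a}" using R ab by (auto simp: S_def)
  define L where "L = sorted_list_of_set S"
  define n where "n = length L"
  have setL: "set L = S" unfolding L_def using finS by simp
  have sortL: "sorted_wrt (<) L" unfolding L_def by (rule strict_sorted_list_of_set)
  have n1: "0 < n" using setL unfolding n_def S_def by (cases L) auto
  have Lnth_in: "k < n \<Longrightarrow> L!k \<in> S" for k using setL n_def nth_mem by blast
  have Lrange: "k < n \<Longrightarrow> 0 \<le> L!k \<and> L!k \<le> a" for k using Lnth_in[of k] S_range by auto
  have Lmono: "k \<le> l \<Longrightarrow> l < n \<Longrightarrow> L!k \<le> L!l" for k l
    using sorted_wrt_nth_less[OF sortL, of k l] unfolding n_def by (cases "k = l") auto
  have L0: "L!0 = 0"
  proof -
    have "0 \<in> set L" using setL by (simp add: S_def)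
    then obtain j where j: "j < n" "L!j = 0" unfolding n_def by (auto simp: in_set_conv_nth)
    then have "L!0 \<le> 0" using Lmono[of 0 j] by simp
    moreover have "0 \<le> L!0" using Lrange[OF n1] by simp
    ultimately show ?thesis by simp
  qed
  have Llast: "L!(n-1) = a"
  proof -
    have "a \<in> set L" using setL by (simp add: S_def)
    then obtain j where j: "j < n" "L!j = a" unfolding n_def by (auto simp: in_set_conv_nth)
    then have "a \<le> L!(n-1)" using Lmono[of j "n-1"] by simp
    moreover have "L!(n-1) \<le> a" using Lrange[of "n-1"] n1 by simp
    ultimately show ?thesis by simp
  qed
  define v where "v k = (if k < n then L!k else b)" for k
  have vpos: "0 \<le> v k" for k using Lrange ab by (simp add: v_def)
  have vstep: "v k < v (Suc k)" if k: "k < n" for k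
  proof (cases "Suc k < n")
    case True
    then show ?thesis using sorted_wrt_nth_less[OF sortL, of k "Suc k"] unfolding v_def n_def by simp
  next
    case False
    then have "k = n - 1" using k by simp
    then show ?thesis using False Llast ab k by (simp add: v_def)
  qed
  define c where "c k = (\<lambda>j. if j = i then v k else (0::real))" for k
  have c0: "c 0 = 0" using n1 L0 by (simp add: c_def v_def fun_eq_iff)
  have cstep: "\<forall>k<n. c k < c (Suc k)"
  proof (intro allI impI)
    fix k assume k: "k < n"
    have "c k \<le> c (Suc k)" using vstep[OF k] by (simp add: c_def le_fun_def)
    moreover have "\<not> c (Suc k) \<le> c k" using vstep[OF k] by (auto simp: c_def le_fun_def dest: spec[of _ i])
    ultimately show "c k < c (Suc k)" by (simp add: less_le_not_le)
  qed
  have Xc: "\<omega> \<in> space M \<Longrightarrow> X (c k) \<omega> = N i (v k) \<omega>" for \<omega> k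
    unfolding c_def by (rule Xe)
  define \<Delta> where "\<Delta> k \<omega> = X (c (Suc k)) \<omega> - X (c k) \<omega>" for k \<omega>
  have "indep_vars (\<lambda>_. count_space UNIV) \<Delta> {..<n}"
    using Pchain[OF c0 cstep] by (simp add: \<Delta>_def[abs_def])
  then have \<Delta>m: "\<And>k. k < n \<Longrightarrow> \<Delta> k \<in> measurable M (count_space UNIV)"
    and indE0: "indep_sets (\<lambda>k. {\<Delta> k -` B \<inter> space M | B. B \<in> sets (count_space UNIV)}) {..<n}"
    unfolding indep_vars_def2 by auto
  define E where "E k = {\<Delta> k -` B \<inter> space M | B. True}" for k
  have indE: "indep_sets E {..<n}" using indE0 unfolding E_def[abs_def] by simp
  have IsE: "Int_stable (E k)" for k unfolding E_def by (rule Int_stable_vimage)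
  define I where "I = (\<lambda>b::bool. if b then {..<n-1} else {n-1})"
  have U: "(\<Union>j\<in>UNIV. I j) = {..<n}" using n1 by (auto simp: I_def UNIV_bool)
  have indE': "indep_sets E (\<Union>j\<in>UNIV. I j)" using indE U by simp
  have disj: "disjoint_family_on I UNIV"
    unfolding disjoint_family_on_def I_def by auto
  have col: "indep_sets (\<lambda>j. sigma_sets (space M) (\<Union>k\<in>I j. E k)) UNIV"
    by (rule indep_sets_collect_sigma[OF indE' IsE disj])
  have ind2: "indep_set (sigma_sets (space M) (\<Union>k\<in>{..<n-1}. E k)) (sigma_sets (space M) (E (n-1)))"
    unfolding indep_set_def
    using col by (subst indep_sets_cong[where G="\<lambda>j. sigma_sets (space M) (\<Union>k\<in>I j. E k)"])
      (auto simp: I_def split: bool.split)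
  define MS where "MS = sigma (space M) (\<Union>k\<in>{..<n-1}. E k)"
  have Epow: "(\<Union>k\<in>{..<n-1}. E k) \<subseteq> Pow (space M)" by (auto simp: E_def)
  have spMS: "space MS = space M" unfolding MS_def using Epow by (simp add: space_measure_of)
  have setsMS: "sets MS = sigma_sets (space M) (\<Union>k\<in>{..<n-1}. E k)"
    unfolding MS_def using Epow by (simp add: sets_measure_of)
  have \<Delta>MS: "k < n - 1 \<Longrightarrow> \<Delta> k \<in> measurable MS (count_space UNIV)" for k
    unfolding measurable_count_space_eq2_countable spMS setsMS
    by (auto intro!: sigma_sets.Basic simp: E_def)
  have tele: "\<omega> \<in> space M \<Longrightarrow> j \<le> n \<Longrightarrow> X (c j) \<omega> = (\<Sum>k<j. \<Delta> k \<omega>)" for \<omega> j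
  proof (induction j)
    case 0
    have "X (c 0) \<omega> = 0" unfolding c0 by (rule X0[OF 0(1)])
    then show ?case by simp
  next
    case (Suc j)
    then have jn: "j < n" by simp
    have "X (c j) \<omega> \<le> X (c (Suc j)) \<omega>"
      using Suc.prems Xc Nmono[of \<omega> "v j" "v (Suc j)" i] vpos vstep[OF jn] by simp
    then show ?case using Suc by (simp add: \<Delta>_def)
  qed
  have sub1: "{N i r -` C \<inter> space M | r C. r \<in> R} \<subseteq> sigma_sets (space M) (\<Union>k\<in>{..<n-1}. E k)"
  proof
    fix x assume "x \<in> {N i r -` C \<inter> space M | r C. r \<in> R}"
    then obtain r C where x: "x = N i r -` C \<inter> space M" and r: "r \<in> R" by blast
    have "r \<in> set L" using setL r by (simp add: S_def)
    then obtain j where j: "j < n" "L!j = r" unfolding n_def by (auto simp: in_set_conv_nth)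
    have eq: "\<omega> \<in> space MS \<Longrightarrow> N i r \<omega> = (\<Sum>k<j. \<Delta> k \<omega>)" for \<omega>
      using tele[of \<omega> j] Xc[of \<omega> j] j spMS by (simp add: v_def)
    have "(\<lambda>\<omega>. \<Sum>k<j. \<Delta> k \<omega>) \<in> measurable MS (count_space UNIV)"
      by (rule measurable_nat_sum) (use j in \<open>auto intro: \<Delta>MS\<close>)
    moreover have "N i r \<in> measurable MS (count_space UNIV) \<longleftrightarrow>
        (\<lambda>\<omega>. \<Sum>k<j. \<Delta> k \<omega>) \<in> measurable MS (count_space UNIV)"
      by (rule measurable_cong) (rule eq)
    ultimately have "N i r \<in> measurable MS (count_space UNIV)" by simp
    then have "N i r -` C \<inter> space MS \<in> sets MS" by (rule measurable_sets) simp
    then show "x \<in> sigma_sets (space M) (\<Union>k\<in>{..<n-1}. E k)" using x spMS setsMS by simp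
  qed
  have sub2: "{(\<lambda>\<omega>. N i b \<omega> - N i a \<omega>) -` B \<inter> space M | B. True} \<subseteq> sigma_sets (space M) (E (n-1))"
  proof
    fix x assume "x \<in> {(\<lambda>\<omega>. N i b \<omega> - N i a \<omega>) -` B \<inter> space M | B. True}"
    then obtain B where x: "x = (\<lambda>\<omega>. N i b \<omega> - N i a \<omega>) -` B \<inter> space M" by blast
    have "\<Delta> (n-1) \<omega> = N i b \<omega> - N i a \<omega>" if "\<omega> \<in> space M" for \<omega>
      using that Xc[of \<omega> n] Xc[of \<omega> "n-1"] n1 Llast by (simp add: \<Delta>_def v_def)
    then have "x = \<Delta> (n-1) -` B \<inter> space M" using x by auto
    then show "x \<in> sigma_sets (space M) (E (n-1))" by (auto simp: E_def intro!: sigma_sets.Basic)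
  qed
  have ev1: "sigma_sets (space M) (\<Union>k\<in>{..<n-1}. E k) \<subseteq> events"
    and ev2: "sigma_sets (space M) (E (n-1)) \<subseteq> events"
    using indep_setD_ev1[OF ind2] indep_setD_ev2[OF ind2] by auto
  have sub1': "sigma_sets (space M) {N i r -` C \<inter> space M | r C. r \<in> R} \<subseteq> sigma_sets (space M) (\<Union>k\<in>{..<n-1}. E k)"
    by (rule sigma_sets_mono[OF sub1])
  show ?thesis
  proof (rule indep_setI[OF order_trans[OF sub1' ev1] order_trans[OF sub2 ev2]])
    fix x y assume "x \<in> sigma_sets (space M) {N i r -` C \<inter> space M | r C. r \<in> R}"
      "y \<in> {(\<lambda>\<omega>. N i b \<omega> - N i a \<omega>) -` B \<inter> space M | B. True}"
    then show "prob (x \<inter> y) = prob x * prob y"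
      by (rule indep_setD[OF ind2 subsetD[OF sub1'] subsetD[OF sub2]])
  qed
qed

end

lemma Int_stable_sigma_sets: "A \<subseteq> Pow \<Omega> \<Longrightarrow> Int_stable (sigma_sets \<Omega> A)"
proof (rule Int_stableI)
  fix x y assume A: "A \<subseteq> Pow \<Omega>" and x: "x \<in> sigma_sets \<Omega> A" and y: "y \<in> sigma_sets \<Omega> A"
  have xs: "x \<subseteq> \<Omega>" "y \<subseteq> \<Omega>" using sigma_sets_into_sp[OF A] x y by auto
  have "x \<inter> y = \<Omega> - ((\<Omega> - x) \<union> (\<Omega> - y))" using xs by auto
  also have "\<dots> \<in> sigma_sets \<Omega> A" using x y by (intro sigma_sets.Compl sigma_sets_Un)
  finally show "x \<inter> y \<in> sigma_sets \<Omega> A" .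
qed

lemma (in prob_space) indep_combine:
  fixes G A B :: "'i \<Rightarrow> 'a set set"
  assumes ind: "indep_sets G UNIV"
    and sa: "\<And>i. sigma_algebra (space M) (G i)"
    and AG: "\<And>i. A i \<subseteq> G i" and BG: "\<And>i. B i \<subseteq> G i"
    and AB: "\<And>i. indep_set (A i) (B i)"
  shows "indep_sets (\<lambda>(i,b). if b then B i else A i) UNIV"
proof (rule indep_setsI)
  fix j :: "'i \<times> bool" show "(case j of (i,b) \<Rightarrow> if b then B i else A i) \<subseteq> events"
    using indep_setD_ev1[OF AB] indep_setD_ev2[OF AB] by (auto split: prod.split)
next
  fix Z :: "'i \<times> bool \<Rightarrow> 'a set" and J assume J: "J \<noteq> {}" "J \<subseteq> UNIV" "finite J"
    and Z: "\<forall>j\<in>J. Z j \<in> (case j of (i,b) \<Rightarrow> if b then B i else A i)"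
  have ZA: "(i, False) \<in> J \<Longrightarrow> Z (i, False) \<in> A i" for i using Z by fastforce
  have ZB: "(i, True) \<in> J \<Longrightarrow> Z (i, True) \<in> B i" for i using Z by fastforce
  have Zev: "j \<in> J \<Longrightarrow> Z j \<in> events" for j
  proof -
    assume j: "j \<in> J"
    obtain i b where jb: "j = (i, b)" by (cases j)
    show ?thesis
    proof (cases b)
      case True
      then show ?thesis using ZB[of i] j jb indep_setD_ev2[OF AB, of i] by auto
    next
      case False
      then show ?thesis using ZA[of i] j jb indep_setD_ev1[OF AB, of i] by auto
    qed
  qed
  have Zsp: "j \<in> J \<Longrightarrow> Z j \<subseteq> space M" for j using Zev sets.sets_into_space by blast
  define K where "K = fst ` J"
  define C where "C i = (if (i,False) \<in> J then Z (i,False) else space M) \<inter> (if (i,True) \<in> J then Z (i,True) else space M)" for i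
  have CG: "C i \<in> G i" for i
  proof -
    interpret Gi: sigma_algebra "space M" "G i" by (rule sa)
    show ?thesis unfolding C_def using ZA[of i] ZB[of i] AG[of i] BG[of i]
      by (intro Gi.Int) auto
  qed
  obtain j0 where j0: "j0 \<in> J" using J(1) by blast
  have inter: "(\<Inter>j\<in>J. Z j) = (\<Inter>i\<in>K. C i)"
  proof
    show "(\<Inter>j\<in>J. Z j) \<subseteq> (\<Inter>i\<in>K. C i)"
    proof
      fix x assume x: "x \<in> (\<Inter>j\<in>J. Z j)"
      then have xs: "x \<in> space M" using Zsp[OF j0] j0 by blast
      show "x \<in> (\<Inter>i\<in>K. C i)" using x xs by (auto simp: C_def)
    qed
    show "(\<Inter>i\<in>K. C i) \<subseteq> (\<Inter>j\<in>J. Z j)"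
    proof
      fix x assume x: "x \<in> (\<Inter>i\<in>K. C i)"
      show "x \<in> (\<Inter>j\<in>J. Z j)"
      proof
        fix j assume j: "j \<in> J"
        obtain i b where jb: "j = (i, b)" by (cases j)
        have "i \<in> K" using j jb unfolding K_def by force
        then have "x \<in> C i" using x by blast
        then show "x \<in> Z j" using j jb by (cases b) (auto simp: C_def)
      qed
    qed
  qed
  have K: "K \<noteq> {}" "finite K" using J unfolding K_def by auto
  have pK: "prob (\<Inter>i\<in>K. C i) = (\<Prod>i\<in>K. prob (C i))"
    by (rule indep_setsD[OF ind]) (use K CG in auto)
  have PC: "prob (C i) = (\<Prod>b\<in>{b. (i,b) \<in> J}. prob (Z (i,b)))" if i: "i \<in> K" for i
  proof (cases "(i,False) \<in> J"; cases "(i,True) \<in> J")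
    assume a: "(i,False) \<in> J" and b: "(i,True) \<in> J"
    have S: "{b. (i,b) \<in> J} = {False, True}"
    proof (rule set_eqI)
      fix x show "x \<in> {b. (i,b) \<in> J} \<longleftrightarrow> x \<in> {False, True}" using a b by (cases x) auto
    qed
    have "prob (C i) = prob (Z (i,False)) * prob (Z (i,True))"
      unfolding C_def using a b by (simp add: indep_setD[OF AB ZA[OF a] ZB[OF b]])
    then show ?thesis unfolding S by simp
  next
    assume a: "(i,False) \<in> J" and b: "(i,True) \<notin> J"
    have S: "{b. (i,b) \<in> J} = {False}"
    proof (rule set_eqI)
      fix x show "x \<in> {b. (i,b) \<in> J} \<longleftrightarrow> x \<in> {False}" using a b by (cases x) auto
    qed
    have "C i = Z (i,False)" unfolding C_def using a b Zsp[OF a] by auto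
    then show ?thesis unfolding S by simp
  next
    assume a: "(i,False) \<notin> J" and b: "(i,True) \<in> J"
    have S: "{b. (i,b) \<in> J} = {True}"
    proof (rule set_eqI)
      fix x show "x \<in> {b. (i,b) \<in> J} \<longleftrightarrow> x \<in> {True}" using a b by (cases x) auto
    qed
    have "C i = Z (i,True)" unfolding C_def using a b Zsp[OF b] by auto
    then show ?thesis unfolding S by simp
  next
    assume a: "(i,False) \<notin> J" and b: "(i,True) \<notin> J"
    obtain bb where "(i, bb) \<in> J" using i unfolding K_def by force
    then show ?thesis using a b by (cases bb) auto
  qed
  have SigJ: "Sigma K (\<lambda>i. {b. (i,b) \<in> J}) = J" unfolding K_def by force
  have "(\<Prod>i\<in>K. prob (C i)) = (\<Prod>i\<in>K. \<Prod>b\<in>{b. (i,b) \<in> J}. prob (Z (i,b)))"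
    by (rule prod.cong) (simp_all add: PC)
  also have "\<dots> = (\<Prod>(i,b)\<in>Sigma K (\<lambda>i. {b. (i,b) \<in> J}). prob (Z (i,b)))"
    by (rule prod.Sigma) (use K in auto)
  also have "\<dots> = (\<Prod>j\<in>J. prob (Z j))" unfolding SigJ by (simp add: split_def)
  finally show "prob (\<Inter>j\<in>J. Z j) = (\<Prod>j\<in>J. prob (Z j))" using inter pK by simp
qed

context mpp begin

lemma W1:
  assumes P: "mp_poisson_process M \<Lambda> X" and ab: "0 \<le> a" "a \<le> b"
  shows "indep_set (sigma_sets (space M) {N i r -` C \<inter> space M | r C. 0 \<le> r \<and> r \<le> a})
                   {(\<lambda>\<omega>. N i b \<omega> - N i a \<omega>) -` B \<inter> space M | B. True}"
proof -
  let ?G = "{N i r -` C \<inter> space M | r C. 0 \<le> r \<and> r \<le> a}"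
  let ?B = "{(\<lambda>\<omega>. N i b \<omega> - N i a \<omega>) -` B \<inter> space M | B. True}"
  have Gsets: "?G \<subseteq> events" using meas by (auto intro!: measurable_sets)
  have Gev: "sigma_sets (space M) ?G \<subseteq> events" by (rule sets.sigma_sets_subset[OF Gsets])
  have Dm: "(\<lambda>\<omega>. N i b \<omega> - N i a \<omega>) \<in> measurable M (count_space UNIV)"
    using ab by (intro measurable_nat_diff meas) auto
  have Bev: "?B \<subseteq> events" using measurable_sets[OF Dm] by auto
  have Gpow: "?G \<subseteq> Pow (space M)" by auto
  show ?thesis
  proof (cases "a = b")
    case True
    show ?thesis
    proof (rule indep_setI[OF Gev Bev])
      fix x y assume x: "x \<in> sigma_sets (space M) ?G" and "y \<in> ?B"
      then obtain B where y: "y = (\<lambda>\<omega>. N i b \<omega> - N i a \<omega>) -` B \<inter> space M" by blast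
      have yy: "y = (if 0 \<in> B then space M else {})" using y True by auto
      have "x \<subseteq> space M" using sigma_sets_into_sp[OF Gpow x] .
      then show "prob (x \<inter> y) = prob x * prob y" using yy by (auto simp: Int_absorb2 prob_space)
    qed
  next
    case False
    then have ab': "a < b" using ab by simp
    define \<sigma>R where "\<sigma>R R = sigma_sets (space M) {N i r -` C \<inter> space M | r C. r \<in> R}" for R
    define \<pi> where "\<pi> = {x. \<exists>R. finite R \<and> R \<subseteq> {0..a} \<and> x \<in> \<sigma>R R}"
    have \<sigma>R_sub: "R \<subseteq> {0..a} \<Longrightarrow> \<sigma>R R \<subseteq> sigma_sets (space M) ?G" for R
      unfolding \<sigma>R_def by (rule sigma_sets_subseteq) force
    have \<pi>ev: "\<pi> \<subseteq> events" using \<sigma>R_sub Gev unfolding \<pi>_def by blast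
    have ind\<pi>: "indep_set \<pi> ?B"
    proof (rule indep_setI[OF \<pi>ev Bev])
      fix x y assume xy: "x \<in> \<pi>" "y \<in> ?B"
      then obtain R where R: "finite R" "R \<subseteq> {0..a}" "x \<in> \<sigma>R R" unfolding \<pi>_def by blast
      show "prob (x \<inter> y) = prob x * prob y"
        using indep_setD[OF CL[OF P R(1,2) ab(1) ab'] R(3)[unfolded \<sigma>R_def] xy(2)] .
    qed
    have Int\<pi>: "Int_stable \<pi>"
    proof (rule Int_stableI)
      fix x y assume "x \<in> \<pi>" "y \<in> \<pi>"
      then obtain R1 R2 where R1: "finite R1" "R1 \<subseteq> {0..a}" "x \<in> \<sigma>R R1"
        and R2: "finite R2" "R2 \<subseteq> {0..a}" "y \<in> \<sigma>R R2" unfolding \<pi>_def by blast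
      have sub: "\<sigma>R R1 \<subseteq> \<sigma>R (R1 \<union> R2)" "\<sigma>R R2 \<subseteq> \<sigma>R (R1 \<union> R2)"
        unfolding \<sigma>R_def by (rule sigma_sets_subseteq, blast)+
      have pw: "{N i r -` C \<inter> space M | r C. r \<in> R1 \<union> R2} \<subseteq> Pow (space M)" by auto
      have "x \<inter> y \<in> \<sigma>R (R1 \<union> R2)"
        using Int_stable_sigma_sets[OF pw] sub R1(3) R2(3) unfolding \<sigma>R_def Int_stable_def by blast
      then show "x \<inter> y \<in> \<pi>" unfolding \<pi>_def using R1 R2 by blast
    qed
    have \<sigma>\<pi>: "sigma_sets (space M) \<pi> = sigma_sets (space M) ?G"
    proof (rule sigma_sets_eqI)
      fix x assume "x \<in> \<pi>" then show "x \<in> sigma_sets (space M) ?G" using \<sigma>R_sub unfolding \<pi>_def by blast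
    next
      fix x assume "x \<in> ?G"
      then obtain r C where x: "x = N i r -` C \<inter> space M" "0 \<le> r" "r \<le> a" by blast
      have "x \<in> \<sigma>R {r}" unfolding \<sigma>R_def x(1) by (rule sigma_sets.Basic) blast
      then have "x \<in> \<pi>" unfolding \<pi>_def using x by (intro CollectI exI[of _ "{r}"]) auto
      then show "x \<in> sigma_sets (space M) \<pi>" by (rule sigma_sets.Basic)
    qed
    have "indep_set (sigma_sets (space M) \<pi>) (sigma_sets (space M) ?B)"
      by (rule indep_set_sigma_sets[OF ind\<pi> Int\<pi> Int_stable_vimage])
    then have ind3: "indep_set (sigma_sets (space M) ?G) (sigma_sets (space M) ?B)" by (simp only: \<sigma>\<pi>)
    show ?thesis
    proof (rule indep_setI[OF Gev Bev])
      fix x y assume "x \<in> sigma_sets (space M) ?G" "y \<in> ?B"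
      then show "prob (x \<inter> y) = prob x * prob y" by (rule indep_setD[OF ind3 _ sigma_sets.Basic])
    qed
  qed
qed

end

context mpp begin

lemma poisson_Q:
  assumes P: "mp_poisson_process M \<Lambda> X" and st: "0 \<le> s" "s \<le> t"
  shows "Q s t"
proof -
  have Pstat: "distr M (count_space UNIV) (\<lambda>\<omega>. X t \<omega> - X s \<omega>) = distr M (count_space UNIV) (X (t - s))"
    using P st unfolding mp_poisson_process_def by blast
  have ts: "0 \<le> t - s" using st by simp
  have Pmarg: "measure M {\<omega>\<in>space M. X (t - s) \<omega> = k} = exp (- dotp \<Lambda> (t - s)) * dotp \<Lambda> (t - s) ^ k / fact k" for k
    using P ts unfolding mp_poisson_process_def by blast
  define Ai where "Ai i = sigma_sets (space M) {N i r -` C \<inter> space M | r C. 0 \<le> r \<and> r \<le> s i}" for i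
  define Di where "Di i \<omega> = N i (t i) \<omega> - N i (s i) \<omega>" for i \<omega>
  define Bi where "Bi i = {Di i -` B \<inter> space M | B. True}" for i
  define G where "G i = proc_sigma M (N i) {0..}" for i
  have si: "0 \<le> s i" "s i \<le> t i" for i using st by (auto simp: le_fun_def)
  have W1': "indep_set (Ai i) (Bi i)" for i
    unfolding Ai_def Bi_def Di_def[abs_def] by (rule W1[OF P si])
  have Gpow: "{N i r -` C \<inter> space M | r C. r \<in> {0..}} \<subseteq> Pow (space M)" for i by auto
  have saG: "sigma_algebra (space M) (G i)" for i
    unfolding G_def proc_sigma_def by (rule sigma_algebra_sigma_sets[OF Gpow])
  have AG: "Ai i \<subseteq> G i" for i
    unfolding Ai_def G_def proc_sigma_def by (rule sigma_sets_subseteq) force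
  have BG: "Bi i \<subseteq> G i" for i
  proof -
    define MG where "MG = sigma (space M) {N i r -` C \<inter> space M | r C. r \<in> {0..}}"
    have sp: "space MG = space M" unfolding MG_def using Gpow[of i] by (simp add: space_measure_of)
    have ss: "sets MG = G i" unfolding MG_def G_def proc_sigma_def using Gpow[of i] by (simp add: sets_measure_of)
    have Nm: "0 \<le> r \<Longrightarrow> N i r \<in> measurable MG (count_space UNIV)" for r
      unfolding measurable_count_space_eq2_countable sp ss G_def proc_sigma_def
      by (auto intro!: sigma_sets.Basic)
    have "Di i \<in> measurable MG (count_space UNIV)"
      unfolding Di_def[abs_def] using si[of i] by (intro measurable_nat_diff Nm) auto
    then show ?thesis unfolding Bi_def using measurable_sets[of "Di i" MG] sp ss by auto
  qed
  have indG: "indep_sets G UNIV" using indep by (simp add: G_def[abs_def])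
  have comb: "indep_sets (\<lambda>(i,b). if b then Bi i else Ai i) UNIV"
    by (rule indep_combine[OF indG saG AG BG W1'])
  define E where "E = (\<lambda>(i,b). if b then Bi i else Ai i)"
  define I :: "bool \<Rightarrow> ('d \<times> bool) set" where "I c = {(i, \<not> c) | i. True}" for c
  have UI: "(\<Union>j\<in>UNIV. I j) = UNIV" unfolding I_def by auto
  have IsE: "Int_stable (E x)" for x
  proof (cases x)
    case (Pair i b)
    show ?thesis
    proof (cases b)
      case True
      have "Int_stable (Bi i)" unfolding Bi_def by (rule Int_stable_vimage)
      then show ?thesis using Pair True unfolding E_def by simp
    next
      case False
      have "{N i r -` C \<inter> space M | r C. 0 \<le> r \<and> r \<le> s i} \<subseteq> Pow (space M)" by auto
      then have "Int_stable (Ai i)" unfolding Ai_def by (rule Int_stable_sigma_sets)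
      then show ?thesis using Pair False unfolding E_def by simp
    qed
  qed
  have disj: "disjoint_family_on I UNIV" unfolding disjoint_family_on_def I_def by auto
  have col: "indep_sets (\<lambda>j. sigma_sets (space M) (\<Union>x\<in>I j. E x)) UNIV"
    by (rule indep_sets_collect_sigma) (use comb UI IsE disj in \<open>simp_all add: E_def\<close>)
  have I1: "I True = range (\<lambda>i. (i, False))" unfolding I_def by auto
  have I2: "I False = range (\<lambda>i. (i, True))" unfolding I_def by auto
  have U1: "(\<Union>x\<in>I True. E x) = (\<Union>i. Ai i)" unfolding I1 image_image E_def by simp
  have U2: "(\<Union>x\<in>I False. E x) = (\<Union>i. Bi i)" unfolding I2 image_image E_def by simp
  have indF: "indep_set (sigma_sets (space M) (\<Union>i. Ai i)) (sigma_sets (space M) (\<Union>i. Bi i))"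
    unfolding indep_set_def
    using col by (subst indep_sets_cong[where G="\<lambda>j. sigma_sets (space M) (\<Union>x\<in>I j. E x)"])
      (auto simp: U1 U2 split: bool.split)
  have FA: "sets (F s) \<subseteq> sigma_sets (space M) (\<Union>i. Ai i)"
    unfolding sets_F
  proof (rule sigma_sets_subseteq)
    show "gen s \<subseteq> (\<Union>i. Ai i)" unfolding gen_def Ai_def by (auto intro!: sigma_sets.Basic)
  qed
  define D where "D = dX s t"
  have DB: "D -` {k} \<inter> space M \<in> sigma_sets (space M) (\<Union>i. Bi i)" for k
  proof -
    define MS where "MS = sigma (space M) (\<Union>i. Bi i)"
    have pw: "(\<Union>i. Bi i) \<subseteq> Pow (space M)" unfolding Bi_def by auto
    have sp: "space MS = space M" unfolding MS_def using pw by (simp add: space_measure_of)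
    have ss: "sets MS = sigma_sets (space M) (\<Union>i. Bi i)" unfolding MS_def using pw by (simp add: sets_measure_of)
    have Dim: "Di i \<in> measurable MS (count_space UNIV)" for i
      unfolding measurable_count_space_eq2_countable sp ss
      by (auto intro!: sigma_sets.Basic simp: Bi_def)
    have sm: "(\<lambda>\<omega>. \<Sum>i\<in>UNIV. Di i \<omega>) \<in> measurable MS (count_space UNIV)"
      by (rule measurable_nat_sum) (auto intro: Dim)
    have eq: "\<omega> \<in> space MS \<Longrightarrow> D \<omega> = (\<Sum>i\<in>UNIV. Di i \<omega>)" for \<omega>
      unfolding D_def dX_def X_def Di_def sp
      by (rule sum_subtractf_nat[symmetric]) (use si in \<open>auto intro: Nmono\<close>)
    have "D \<in> measurable MS (count_space UNIV) \<longleftrightarrow> (\<lambda>\<omega>. \<Sum>i\<in>UNIV. Di i \<omega>) \<in> measurable MS (count_space UNIV)"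
      by (rule measurable_cong) (rule eq)
    with sm have "D \<in> measurable MS (count_space UNIV)" by simp
    then have "D -` {k} \<inter> space MS \<in> sets MS" by (rule measurable_sets) simp
    then show ?thesis using sp ss by simp
  qed
  have Dm: "D \<in> measurable M (count_space UNIV)" unfolding D_def by (rule dX_meas[OF st])
  have pk: "prob (D -` {k} \<inter> space M) = poi (dotp \<Lambda> t - dotp \<Lambda> s) k" for k
  proof -
    have m1: "(\<lambda>\<omega>. X t \<omega> - X s \<omega>) \<in> measurable M (count_space UNIV)"
      using Dm by (simp add: D_def dX_def[abs_def])
    have "prob (D -` {k} \<inter> space M) = measure (distr M (count_space UNIV) (\<lambda>\<omega>. X t \<omega> - X s \<omega>)) {k}"
      using m1 by (simp add: measure_distr D_def dX_def[abs_def])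
    also have "\<dots> = measure (distr M (count_space UNIV) (X (t - s))) {k}" by (simp only: Pstat)
    also have "\<dots> = measure M {\<omega>\<in>space M. X (t - s) \<omega> = k}"
      using X_meas[OF ts] by (simp add: measure_distr vimage_def Int_def conj_commute)
    also have "\<dots> = poi (dotp \<Lambda> t - dotp \<Lambda> s) k" by (simp add: Pmarg poi_def dotp_diff)
    finally show ?thesis .
  qed
  show ?thesis
    unfolding Q_def D_def[symmetric]
  proof (intro ballI allI)
    fix A k assume A: "A \<in> sets (F s)"
    have "prob (A \<inter> (D -` {k} \<inter> space M)) = prob A * prob (D -` {k} \<inter> space M)"
      by (rule indep_setD[OF indF subsetD[OF FA A] DB])
    then show "prob (A \<inter> (D -` {k} \<inter> space M)) = prob A * poi (dotp \<Lambda> t - dotp \<Lambda> s) k"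
      by (simp add: pk)
  qed
qed

end

theorem mainTheorem17:
  fixes M :: "'a measure"
    and N :: "'d::finite \<Rightarrow> real \<Rightarrow> 'a \<Rightarrow> nat"
    and \<Lambda> :: "'d \<Rightarrow> real"
  assumes "prob_space M"
    and meas: "\<And>i s. 0 \<le> s \<Longrightarrow> N i s \<in> measurable M (count_space UNIV)"
    and counting: "\<And>i. simple_counting_process M (N i)"
    and indep: "prob_space.indep_sets M (\<lambda>i. proc_sigma M (N i) {0..}) UNIV"
    and pos: "\<And>i. \<Lambda> i > 0"
  shows "(\<forall>u\<in>{0<..1::real}. mp_martingale M (mp_filtration M N)
            (\<lambda>t \<omega>. exp ((\<Sum>i\<in>UNIV. real (N i (t i) \<omega>)) * ln u - dotp \<Lambda> t * (u - 1))))
         \<longleftrightarrow> mp_poisson_process M \<Lambda> (\<lambda>t \<omega>. \<Sum>i\<in>UNIV. N i (t i) \<omega>)"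
proof -
  interpret mpp M N \<Lambda>
    using assms(1-4) by (simp add: mpp_def mpp_axioms_def)
  have Xeq: "(\<lambda>t \<omega>. \<Sum>i\<in>UNIV. N i (t i) \<omega>) = X" by (simp add: X_def[abs_def])
  have Eeq: "(\<lambda>t \<omega>. exp ((\<Sum>i\<in>UNIV. real (N i (t i) \<omega>)) * ln u - dotp \<Lambda> t * (u - 1))) = E u" for u
    by (simp add: E_def[abs_def])
  show ?thesis unfolding Xeq Eeq
  proof
    assume H: "\<forall>u\<in>{0<..1::real}. mp_martingale M (mp_filtration M N) (E u)"
    have "Q s t" if st: "0 \<le> s" "s \<le> t" for s t
    proof (rule mart_Q[OF st])
      fix u :: real assume u: "0 < u" "u \<le> 1"
      then have "mp_martingale M (mp_filtration M N) (E u)" using H by auto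
      then show "AE \<omega> in M. real_cond_exp M (mp_filtration M N s) (E u t) \<omega> = E u s \<omega>"
        unfolding mp_martingale_def using st by blast
    qed
    then show "mp_poisson_process M \<Lambda> X" by (rule Q_poisson)
  next
    assume P: "mp_poisson_process M \<Lambda> X"
    show "\<forall>u\<in>{0<..1::real}. mp_martingale M (mp_filtration M N) (E u)"
    proof
      fix u :: real assume "u \<in> {0<..1}"
      then have u: "0 < u" "u \<le> 1" by auto
      show "mp_martingale M (mp_filtration M N) (E u)"
        unfolding mp_martingale_def
      proof (intro conjI allI impI)
        fix t :: "'d \<Rightarrow> real" assume t: "0 \<le> t"
        show "integrable M (E u t)" by (rule E_int[OF t u])
        show "E u t \<in> borel_measurable (mp_filtration M N t)" by (rule E_meas_F[OF t u(1)])
      next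
        fix s t :: "'d \<Rightarrow> real" assume st: "0 \<le> s \<and> s \<le> t"
        show "AE \<omega> in M. real_cond_exp M (mp_filtration M N s) (E u t) \<omega> = E u s \<omega>"
          using Q_mart[OF _ _ poisson_Q[OF P] u] st by blast
      qed
    qed
  qed
qed

end
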